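(* Fix integers $L\ge1$, $n_0,\dots,n_L\ge1$, let $\boldsymbol{\mathcal W}=\mathbb{R}^{n_0\times n_1}\times\cdots\times\mathbb{R}^{n_{L-1}\times n_L}$, and for $\mathbf W=(W_1,\dots,W_L)\in\boldsymbol{\mathcal W}$ let $F(\mathbf W,\cdot)=\Lambda_L(W_L,\cdot)\circ\cdots\circ\Lambda_1(W_1,\cdot)\colon\mathbb{R}^{n_0}\to\mathbb{R}^{n_L}$ with $\Lambda_l(W_l,x)=\sigma_l(W_l^\top x+b_l)$, fixed biases $b_l$, each $\sigma_l$ ($l<L$) applying a smooth, monotonically increasing, Lipschitz scalar function entrywise, and $\sigma_L=\mathrm{id}$. Let $\boldsymbol{\mathcal X}\subset\mathbb{R}^{n_0}$ be a compact smooth submanifold (the input space). Then for every rank-deficient $\mathbf W_1\in\boldsymbol{\mathcal W}$ and every $\epsilon>0$ there exists a full-rank $\mathbf W_2\in\boldsymbol{\mathcal W}$ such that $\|F(\mathbf W_2,x)-F(\mathbf W_1,x)\|_\infty\le\epsilon$ for all $x\in\boldsymbol{\mathcal X}$.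
   Context: $\mathbf W=(W_1,\dots,W_L)$ is called full-rank if every matrix $W_l$ has full rank $\min(n_{l-1},n_l)$, and rank-deficient otherwise. $\|\cdot\|_\infty$ is the max-norm on $\mathbb{R}^{n_L}$. The paper assumes throughout that the input space is a compact smooth manifold. *)

theory Defs
  imports "HOL-Analysis.Analysis" "Jordan_Normal_Form.DL_Rank"
begin

definition smooth_fun :: "(real \<Rightarrow> real) \<Rightarrow> bool" where
  "smooth_fun f \<longleftrightarrow> (\<forall>k x. ((deriv ^^ k) f) differentiable (at x))"

definition admissible_activation :: "(real \<Rightarrow> real) \<Rightarrow> bool" where
  "admissible_activation f \<longleftrightarrow> smooth_fun f \<and> mono f \<and> (\<exists>C. C-lipschitz_on UNIV f)"

definition full_rank_mat :: "real mat \<Rightarrow> bool" where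
  "full_rank_mat A \<longleftrightarrow> vec_space.rank (dim_row A) A = min (dim_row A) (dim_col A)"

text \<open>Weight space for layer widths ns = [n_0, ..., n_L]: lists [W_1, ..., W_L]
  with W_l an n_(l-1) x n_l matrix.\<close>

definition weight_space :: "nat list \<Rightarrow> real mat list set" where
  "weight_space ns = {Ws. length Ws + 1 = length ns \<and>
     (\<forall>l < length Ws. Ws ! l \<in> carrier_mat (ns ! l) (ns ! Suc l))}"

definition full_rank_weights :: "real mat list \<Rightarrow> bool" where
  "full_rank_weights Ws \<longleftrightarrow> (\<forall>W \<in> set Ws. full_rank_mat W)"

definition layer :: "(real \<Rightarrow> real) \<Rightarrow> real mat \<Rightarrow> real vec \<Rightarrow> real vec \<Rightarrow> real vec" where
  "layer s W b x = map_vec s (transpose_mat W *\<^sub>v x + b)"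

fun net_aux :: "nat \<Rightarrow> (nat \<Rightarrow> real \<Rightarrow> real) \<Rightarrow> (nat \<Rightarrow> real vec) \<Rightarrow> real mat list \<Rightarrow> real vec \<Rightarrow> real vec" where
  "net_aux l s b [] x = x"
| "net_aux l s b (W # Ws) x = net_aux (Suc l) s b Ws (layer (s l) W (b l) x)"

text \<open>F(W, x) = Lambda_L(W_L, .) o ... o Lambda_1(W_1, .) applied to x (layers indexed from 1).\<close>

definition net :: "(nat \<Rightarrow> real \<Rightarrow> real) \<Rightarrow> (nat \<Rightarrow> real vec) \<Rightarrow> real mat list \<Rightarrow> real vec \<Rightarrow> real vec" where
  "net s b Ws x = net_aux 1 s b Ws x"

definition max_norm :: "real vec \<Rightarrow> real" where
  "max_norm v = (MAX i \<in> {..<dim_vec v}. \<bar>vec_index v i\<bar>)"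

text \<open>Identification of R^n (carrier_vec n) with the functions nat => real vanishing
  outside {0..<n}; this is a homeomorphism onto its image for the product topology, so
  it transports the Euclidean topology (used to state compactness).\<close>

definition vec_embed :: "real vec \<Rightarrow> (nat \<Rightarrow> real)" where
  "vec_embed v = (\<lambda>i. if i < dim_vec v then vec_index v i else 0)"

end

theory Submission imports Defs "Jordan_Normal_Form.DL_Rank_Submatrix" "Jordan_Normal_Form.Char_Poly" begin

lemma (in vec_space) rank_le_nr:
  assumes "A \<in> carrier_mat n nc"
  shows "rank A \<le> n"
proof -
  have "subspace class_ring (span (set (cols A))) V"
    using assms by (metis cols_dim carrier_matD(1) span_is_subspace)
  then show ?thesis
    unfolding rank_def
    using subspace_dim[OF _ fin_dim fin_dim_span_cols[OF assms]] dim_is_n by metis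
qed

lemma pick_lessThan: "(i::nat) < k \<Longrightarrow> pick {..<k} i = i"
proof -
  assume "i < k"
  have "{a \<in> {..<k}. a < i} = {..<i}" using \<open>i<k\<close> by auto
  then have "card {a \<in> {..<k}. a < i} = i" by simp
  then show ?thesis using pick_card_in_set[of i "{..<k}"] \<open>i<k\<close> by simp
qed

lemma perturb_full_rank:
  fixes A :: "real mat"
  assumes A: "A \<in> carrier_mat n m" and d: "\<delta> > 0"
  shows "\<exists>V \<in> carrier_mat n m. full_rank_mat V \<and>
           (\<forall>i<n. \<forall>j<m. \<bar>V $$ (i,j) - A $$ (i,j)\<bar> \<le> \<delta>)"
proof -
  define k where "k = min n m"
  define B where "B = submatrix A {..<k} {..<k}"
  have ck': "{i. i < n \<and> i \<in> {..<k}} = {..<k}" "{i. i < m \<and> i \<in> {..<k}} = {..<k}"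
    unfolding k_def by auto
  have "{i. i < n \<and> i < k} = {..<k}" "{i. i < m \<and> i < k} = {..<k}"
    unfolding k_def by auto
  then have ck: "card {i. i < n \<and> i < k} = k" "card {i. i < m \<and> i < k} = k" by simp_all
  have B: "B \<in> carrier_mat k k" using A carrier_matD[OF A] unfolding B_def by (intro carrier_matI) (simp_all add: dim_submatrix ck' ck)
  have mB: "- B \<in> carrier_mat k k" using B by simp
  define p where "p = char_poly (- B)"
  have "coeff p k = 1" using degree_monic_char_poly[OF mB] unfolding p_def by simp
  then have "p \<noteq> 0" by auto
  then have fin: "finite {t. poly p t = 0}" by (rule poly_roots_finite)
  have "infinite ({0<..\<delta>} - {t. poly p t = 0})"
    using infinite_Ioc[OF d] fin by (meson Diff_infinite_finite)
  then obtain t where t: "t \<in> {0<..\<delta>}" "poly p t \<noteq> 0"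
    by (metis (mono_tags, lifting) DiffE finite.emptyI mem_Collect_eq ex_in_conv)
  define V where "V = A + mat n m (\<lambda>(i,j). if i = j then t else 0)"
  have V: "V \<in> carrier_mat n m" using A unfolding V_def by auto
  have sub: "submatrix V {..<k} {..<k} = B + t \<cdot>\<^sub>m 1\<^sub>m k"
  proof (rule eq_matI)
    show "dim_row (submatrix V {..<k} {..<k}) = dim_row (B + t \<cdot>\<^sub>m 1\<^sub>m k)"
      using V B carrier_matD[OF V] by (simp add: dim_submatrix ck' ck)
    show "dim_col (submatrix V {..<k} {..<k}) = dim_col (B + t \<cdot>\<^sub>m 1\<^sub>m k)"
      using V B carrier_matD[OF V] by (simp add: dim_submatrix ck' ck)
    fix i j assume ij: "i < dim_row (B + t \<cdot>\<^sub>m 1\<^sub>m k)" "j < dim_col (B + t \<cdot>\<^sub>m 1\<^sub>m k)"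
    then have ij': "i < k" "j < k" using B by auto
    then have "i < n" "j < m" unfolding k_def by auto
    have e1: "submatrix V {..<k} {..<k} $$ (i,j) = V $$ (pick {..<k} i, pick {..<k} j)"
      by (rule submatrix_index) (use ij' in \<open>simp_all add: carrier_matD[OF V] ck\<close>)
    have e2: "B $$ (i,j) = A $$ (pick {..<k} i, pick {..<k} j)"
      unfolding B_def
      by (rule submatrix_index) (use ij' in \<open>simp_all add: carrier_matD[OF A] ck\<close>)
    show "submatrix V {..<k} {..<k} $$ (i, j) = (B + t \<cdot>\<^sub>m 1\<^sub>m k) $$ (i, j)"
      using ij' B \<open>i<n\<close> \<open>j<m\<close> carrier_matD[OF A]
      unfolding e1 pick_lessThan[OF ij'(1)] pick_lessThan[OF ij'(2)]
      using e2[unfolded pick_lessThan[OF ij'(1)] pick_lessThan[OF ij'(2)]]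
      by (simp add: V_def)
  qed
  have cm: "- char_matrix (-B) t = B + t \<cdot>\<^sub>m 1\<^sub>m k"
    by (rule eq_matI) (use B in \<open>auto simp: char_matrix_def\<close>)
  have "poly p t = det (B + t \<cdot>\<^sub>m 1\<^sub>m k)"
    unfolding p_def char_poly_matrix[OF mB] cm ..
  then have "det (submatrix V {..<k} {..<k}) \<noteq> 0" using sub t by simp
  from vec_space.rank_gt_minor[OF V this] have "k \<le> vec_space.rank n V" by (simp add: ck' ck)
  moreover have "vec_space.rank n V \<le> m" using vec_space.rank_le_nc[OF V] .
  moreover have "vec_space.rank n V \<le> n" using vec_space.rank_le_nr[OF V] .
  ultimately have "full_rank_mat V" using V unfolding full_rank_mat_def k_def by auto
  moreover have "\<forall>i<n. \<forall>j<m. \<bar>V $$ (i,j) - A $$ (i,j)\<bar> \<le> \<delta>"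
    using A t by (auto simp: V_def)
  ultimately show ?thesis using V by blast
qed

definition vclose :: "real \<Rightarrow> real vec \<Rightarrow> real vec \<Rightarrow> bool" where
  "vclose d x y \<longleftrightarrow> dim_vec x = dim_vec y \<and> (\<forall>i<dim_vec x. \<bar>x $ i - y $ i\<bar> \<le> d)"

definition vbnd :: "real \<Rightarrow> real vec \<Rightarrow> bool" where
  "vbnd B x \<longleftrightarrow> (\<forall>i<dim_vec x. \<bar>x $ i\<bar> \<le> B)"

lemma layer_dim: "dim_vec (layer s W b x) = dim_vec b"
  by (simp add: layer_def)

lemma layer_index:
  assumes "W \<in> carrier_mat k m" "b \<in> carrier_vec m" "dim_vec x = k" "i < m"
  shows "layer s W b x $ i = s ((\<Sum>j<k. W $$ (j,i) * x $ j) + b $ i)"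
proof -
  have "(transpose_mat W *\<^sub>v x) $ i = row (transpose_mat W) i \<bullet> x"
    using assms by simp
  also have "\<dots> = (\<Sum>j<k. W $$ (j,i) * x $ j)"
    using assms unfolding scalar_prod_def by (auto intro!: sum.cong simp: lessThan_atLeast0)
  finally show ?thesis using assms unfolding layer_def by simp
qed

lemma mat_abs_bound: "\<exists>M\<ge>0. \<forall>i<a. \<forall>j<c. \<bar>(A::real mat) $$ (i,j)\<bar> \<le> M"
proof (intro exI conjI allI impI)
  show "0 \<le> (\<Sum>i<a. \<Sum>j<c. \<bar>A $$ (i,j)\<bar>)" by (intro sum_nonneg) auto
  fix i j assume "i < a" "j < c"
  have "\<bar>A $$ (i,j)\<bar> \<le> (\<Sum>j<c. \<bar>A $$ (i,j)\<bar>)"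
    using \<open>j<c\<close> by (intro member_le_sum) auto
  also have "\<dots> \<le> (\<Sum>i<a. \<Sum>j<c. \<bar>A $$ (i,j)\<bar>)"
    using \<open>i<a\<close> by (intro member_le_sum[where f="\<lambda>i. \<Sum>j<c. \<bar>A $$ (i,j)\<bar>"]) (auto intro: sum_nonneg)
  finally show "\<bar>A $$ (i,j)\<bar> \<le> (\<Sum>i<a. \<Sum>j<c. \<bar>A $$ (i,j)\<bar>)" .
qed

lemma vec_abs_bound: "\<exists>M\<ge>0. \<forall>i<a. \<bar>(v::real vec) $ i\<bar> \<le> M"
proof (intro exI conjI allI impI)
  show "0 \<le> (\<Sum>i<a. \<bar>v $ i\<bar>)" by (intro sum_nonneg) auto
  fix i assume "i < a"
  then show "\<bar>v $ i\<bar> \<le> (\<Sum>i<a. \<bar>v $ i\<bar>)" by (intro member_le_sum) auto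
qed

lemma layer_close:
  assumes lip: "C-lipschitz_on UNIV s"
    and W: "W \<in> carrier_mat k m" and V: "V \<in> carrier_mat k m" and b: "b \<in> carrier_vec m"
    and x: "dim_vec x = k" and y: "dim_vec y = k"
    and VW: "\<forall>j<k. \<forall>i<m. \<bar>V $$ (j,i) - W $$ (j,i)\<bar> \<le> d"
    and M: "\<forall>j<k. \<forall>i<m. \<bar>W $$ (j,i)\<bar> \<le> M"
    and bx: "vbnd B x" and xy: "vclose d y x" and d1: "d \<le> 1"
  shows "vclose (d * (C * (k * (B + 1 + M)))) (layer s V b y) (layer s W b x)"
  unfolding vclose_def
proof (intro conjI allI impI)
  show "dim_vec (layer s V b y) = dim_vec (layer s W b x)" by (simp add: layer_dim)
  fix i assume "i < dim_vec (layer s V b y)"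
  then have i: "i < m" using b by (simp add: layer_dim)
  have C0: "0 \<le> C" using lipschitz_on_nonneg[OF lip] .
  let ?u = "(\<Sum>j<k. V $$ (j,i) * y $ j) + b $ i"
  let ?w = "(\<Sum>j<k. W $$ (j,i) * x $ j) + b $ i"
  have "\<bar>s ?u - s ?w\<bar> \<le> C * \<bar>?u - ?w\<bar>"
    using lipschitz_onD[OF lip, of ?u ?w] by (simp add: dist_real_def)
  also have "\<bar>?u - ?w\<bar> = \<bar>\<Sum>j<k. V $$ (j,i) * y $ j - W $$ (j,i) * x $ j\<bar>"
    by (simp add: sum_subtractf)
  also have "\<dots> \<le> (\<Sum>j<k. \<bar>V $$ (j,i) * y $ j - W $$ (j,i) * x $ j\<bar>)"
    by (rule sum_abs)
  also have "\<dots> \<le> (\<Sum>j<k. d * (B + 1 + M))"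
  proof (rule sum_mono)
    fix j assume "j \<in> {..<k}"
    then have j: "j < k" by simp
    have e1: "\<bar>V $$ (j,i) - W $$ (j,i)\<bar> \<le> d" using VW j i by auto
    have e2: "\<bar>W $$ (j,i)\<bar> \<le> M" using M j i by auto
    have e3: "\<bar>y $ j - x $ j\<bar> \<le> d" using xy j y unfolding vclose_def by auto
    have e4: "\<bar>x $ j\<bar> \<le> B" using bx j x unfolding vbnd_def by auto
    have d0: "0 \<le> d" using e1 by linarith
    have e5: "\<bar>y $ j\<bar> \<le> B + 1" using e3 e4 d1 by linarith
    have "V $$ (j,i) * y $ j - W $$ (j,i) * x $ j
       = (V $$ (j,i) - W $$ (j,i)) * y $ j + W $$ (j,i) * (y $ j - x $ j)"
      by (simp add: algebra_simps)
    then have "\<bar>V $$ (j,i) * y $ j - W $$ (j,i) * x $ j\<bar>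
       \<le> \<bar>V $$ (j,i) - W $$ (j,i)\<bar> * \<bar>y $ j\<bar> + \<bar>W $$ (j,i)\<bar> * \<bar>y $ j - x $ j\<bar>"
      by (simp add: abs_mult[symmetric] abs_triangle_ineq)
    also have "\<dots> \<le> d * (B + 1) + M * d"
      by (intro add_mono mult_mono) (use e1 e2 e3 e5 d0 in auto)
    finally show "\<bar>V $$ (j,i) * y $ j - W $$ (j,i) * x $ j\<bar> \<le> d * (B + 1 + M)"
      by (simp add: algebra_simps)
  qed
  also have "(\<Sum>j<k. d * (B + 1 + M)) = k * (d * (B + 1 + M))" by simp
  finally have "\<bar>s ?u - s ?w\<bar> \<le> C * (k * (d * (B + 1 + M)))" using C0 by (simp add: mult_left_mono)
  then show "\<bar>layer s V b y $ i - layer s W b x $ i\<bar> \<le> d * (C * (k * (B + 1 + M)))"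
    using layer_index[OF V b y i, of s] layer_index[OF W b x i, of s]
    by (simp add: algebra_simps)
qed

lemma layer_bnd:
  fixes b :: "real vec"
  assumes lip: "C-lipschitz_on UNIV s"
    and W: "W \<in> carrier_mat k m" and b: "b \<in> carrier_vec m"
    and x: "dim_vec x = k"
    and M: "\<forall>j<k. \<forall>i<m. \<bar>W $$ (j,i)\<bar> \<le> M"
    and Bb: "\<forall>i<m. \<bar>b $ i\<bar> \<le> Bb"
    and bx: "vbnd B x"
  shows "vbnd (\<bar>s 0\<bar> + C * (k * (M * B) + Bb)) (layer s W b x)"
  unfolding vbnd_def
proof (intro allI impI)
  fix i assume "i < dim_vec (layer s W b x)"
  then have i: "i < m" using b by (simp add: layer_dim)
  have C0: "0 \<le> C" using lipschitz_on_nonneg[OF lip] .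
  let ?w = "(\<Sum>j<k. W $$ (j,i) * x $ j) + b $ i"
  have "\<bar>s ?w - s 0\<bar> \<le> C * \<bar>?w - 0\<bar>"
    using lipschitz_onD[OF lip, of ?w 0] by (simp add: dist_real_def)
  then have 1: "\<bar>s ?w\<bar> \<le> \<bar>s 0\<bar> + C * \<bar>?w\<bar>" by simp
  have "\<bar>?w\<bar> \<le> \<bar>\<Sum>j<k. W $$ (j,i) * x $ j\<bar> + \<bar>b $ i\<bar>" by (rule abs_triangle_ineq)
  also have "\<dots> \<le> (\<Sum>j<k. \<bar>W $$ (j,i) * x $ j\<bar>) + Bb"
    using Bb i by (intro add_mono sum_abs) auto
  also have "(\<Sum>j<k. \<bar>W $$ (j,i) * x $ j\<bar>) \<le> (\<Sum>j<k. M * B)"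
  proof (rule sum_mono)
    fix j assume "j \<in> {..<k}"
    then have j: "j < k" by simp
    have e2: "\<bar>W $$ (j,i)\<bar> \<le> M" using M j i by auto
    have e4: "\<bar>x $ j\<bar> \<le> B" using bx j x unfolding vbnd_def by auto
    show "\<bar>W $$ (j,i) * x $ j\<bar> \<le> M * B"
      unfolding abs_mult by (intro mult_mono) (use e2 e4 in auto)
  qed
  finally have "\<bar>?w\<bar> \<le> k * (M * B) + Bb" by simp
  then have "\<bar>s ?w\<bar> \<le> \<bar>s 0\<bar> + C * (k * (M * B) + Bb)"
    using 1 C0 by (meson add_left_mono mult_left_mono order_trans)
  then show "\<bar>layer s W b x $ i\<bar> \<le> \<bar>s 0\<bar> + C * (k * (M * B) + Bb)"
    using layer_index[OF W b x i, of s] by simp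
qed

definition chain_ok :: "(nat \<Rightarrow> real \<Rightarrow> real) \<Rightarrow> (nat \<Rightarrow> real vec) \<Rightarrow> nat \<Rightarrow> nat list \<Rightarrow> real mat list \<Rightarrow> bool" where
  "chain_ok s b l ns Ws \<longleftrightarrow> length ns = length Ws + 1 \<and>
     (\<forall>q<length Ws. Ws ! q \<in> carrier_mat (ns ! q) (ns ! Suc q) \<and> b (l + q) \<in> carrier_vec (ns ! Suc q)
        \<and> (\<exists>C. C-lipschitz_on UNIV (s (l + q))))"

definition wclose :: "real \<Rightarrow> real mat list \<Rightarrow> real mat list \<Rightarrow> bool" where
  "wclose d Vs Ws \<longleftrightarrow> length Vs = length Ws \<and>
     (\<forall>q<length Ws. dim_row (Vs ! q) = dim_row (Ws ! q) \<and> dim_col (Vs ! q) = dim_col (Ws ! q) \<and>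
        (\<forall>i<dim_row (Ws ! q). \<forall>j<dim_col (Ws ! q). \<bar>Vs ! q $$ (i,j) - Ws ! q $$ (i,j)\<bar> \<le> d))"

lemma chain_ok_Cons:
  assumes "chain_ok s b l ns (W # Ws)"
  obtains n0 ns' C where "ns = n0 # ns'" "W \<in> carrier_mat n0 (ns' ! 0)" "b l \<in> carrier_vec (ns' ! 0)"
    "C-lipschitz_on UNIV (s l)" "chain_ok s b (Suc l) ns' Ws"
proof -
  obtain n0 ns' where ns: "ns = n0 # ns'" using assms unfolding chain_ok_def by (cases ns) auto
  have h0: "W \<in> carrier_mat n0 (ns' ! 0) \<and> b l \<in> carrier_vec (ns' ! 0) \<and> (\<exists>C. C-lipschitz_on UNIV (s l))"
    using assms unfolding chain_ok_def ns by (metis add_0_right length_Cons nth_Cons_0 nth_Cons_Suc zero_less_Suc)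
  have "chain_ok s b (Suc l) ns' Ws"
    unfolding chain_ok_def
  proof (intro conjI allI impI)
    show "length ns' = length Ws + 1" using assms unfolding chain_ok_def ns by simp
    fix q assume q: "q < length Ws"
    have "Suc q < length (W # Ws)" using q by simp
    then have "(W # Ws) ! Suc q \<in> carrier_mat (ns ! Suc q) (ns ! Suc (Suc q)) \<and> b (l + Suc q) \<in> carrier_vec (ns ! Suc (Suc q))
        \<and> (\<exists>C. C-lipschitz_on UNIV (s (l + Suc q)))"
      using assms unfolding chain_ok_def by blast
    then show "Ws ! q \<in> carrier_mat (ns' ! q) (ns' ! Suc q)" "b (Suc l + q) \<in> carrier_vec (ns' ! Suc q)"
      "\<exists>C. C-lipschitz_on UNIV (s (Suc l + q))"
      unfolding ns by auto
  qed
  then show ?thesis using that ns h0 by blast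
qed

lemma net_aux_dim:
  "chain_ok s b l ns Ws \<Longrightarrow> dim_vec x = ns ! 0 \<Longrightarrow> dim_vec (net_aux l s b Ws x) = last ns"
proof (induction Ws arbitrary: l ns x)
  case Nil
  then show ?case unfolding chain_ok_def by (cases ns) auto
next
  case (Cons W Ws)
  from chain_ok_Cons[OF Cons.prems(1)] obtain n0 ns' C where
    h: "ns = n0 # ns'" "W \<in> carrier_mat n0 (ns' ! 0)" "b l \<in> carrier_vec (ns' ! 0)"
    "chain_ok s b (Suc l) ns' Ws" by metis
  have "dim_vec (layer (s l) W (b l) x) = ns' ! 0" using h(3) by (simp add: layer_dim)
  from Cons.IH[OF h(4) this] have "dim_vec (net_aux (Suc l) s b Ws (layer (s l) W (b l) x)) = last ns'" .
  moreover have "ns' \<noteq> []" using h(4) unfolding chain_ok_def by auto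
  ultimately show ?case using h(1) by simp
qed

lemma net_aux_cont:
  assumes "chain_ok s b l ns Ws" "\<epsilon> > 0" "B \<ge> 0"
  shows "\<exists>\<delta>>0. \<forall>x y Vs. dim_vec x = ns ! 0 \<longrightarrow> vbnd B x \<longrightarrow> vclose \<delta> y x \<longrightarrow> wclose \<delta> Vs Ws \<longrightarrow>
           vclose \<epsilon> (net_aux l s b Vs y) (net_aux l s b Ws x)"
  using assms
proof (induction Ws arbitrary: l ns B \<epsilon>)
  case Nil
  show ?case
  proof (intro exI[of _ \<epsilon>] conjI allI impI)
    fix x y Vs assume "vclose \<epsilon> y x" "wclose \<epsilon> Vs []"
    then show "vclose \<epsilon> (net_aux l s b Vs y) (net_aux l s b [] x)"
      unfolding wclose_def by simp
  qed (use Nil in simp)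
next
  case (Cons W Ws)
  from chain_ok_Cons[OF Cons.prems(1)] obtain n0 ns' C where
    h: "ns = n0 # ns'" "W \<in> carrier_mat n0 (ns' ! 0)" "b l \<in> carrier_vec (ns' ! 0)"
    "C-lipschitz_on UNIV (s l)" "chain_ok s b (Suc l) ns' Ws" by metis
  have C0: "C \<ge> 0" using lipschitz_on_nonneg[OF h(4)] .
  obtain M where M: "M \<ge> 0" "\<forall>j<n0. \<forall>i<ns' ! 0. \<bar>W $$ (j,i)\<bar> \<le> M" using mat_abs_bound by blast
  obtain Bb where Bb: "Bb \<ge> 0" "\<forall>i<ns' ! 0. \<bar>b l $ i\<bar> \<le> Bb" using vec_abs_bound by blast
  define B' where "B' = \<bar>s l 0\<bar> + C * (n0 * (M * B) + Bb)"
  have B'0: "B' \<ge> 0" unfolding B'_def using C0 M Bb Cons.prems(3) by simp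
  obtain \<delta>' where d': "\<delta>' > 0" and IH: "\<forall>x y Vs. dim_vec x = ns' ! 0 \<longrightarrow> vbnd B' x \<longrightarrow> vclose \<delta>' y x \<longrightarrow> wclose \<delta>' Vs Ws \<longrightarrow>
           vclose \<epsilon> (net_aux (Suc l) s b Vs y) (net_aux (Suc l) s b Ws x)"
    using Cons.IH[OF h(5) Cons.prems(2) B'0] by blast
  define K where "K = C * (n0 * (B + 1 + M))"
  have K0: "K \<ge> 0" unfolding K_def using C0 M Cons.prems(3) by simp
  define \<delta> where "\<delta> = min 1 (min \<delta>' (\<delta>' / (K + 1)))"
  have d0: "\<delta> > 0" unfolding \<delta>_def using d' K0 by simp
  have dK: "\<delta> * K \<le> \<delta>'"
  proof -
    have "\<delta> * K \<le> (\<delta>' / (K + 1)) * K" unfolding \<delta>_def using K0 by (intro mult_right_mono) auto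
    also have "\<dots> \<le> \<delta>'" using K0 d' by (simp add: field_simps)
    finally show ?thesis .
  qed
  show ?case
  proof (intro exI[of _ \<delta>] conjI allI impI d0)
    fix x y Vs assume x: "dim_vec x = ns ! 0" and bx: "vbnd B x" and xy: "vclose \<delta> y x"
      and VW: "wclose \<delta> Vs (W # Ws)"
    obtain V Vs' where Vs: "Vs = V # Vs'" using VW unfolding wclose_def by (cases Vs) auto
    have V0: "dim_row V = dim_row W" "dim_col V = dim_col W"
      "\<forall>i<dim_row W. \<forall>j<dim_col W. \<bar>V $$ (i,j) - W $$ (i,j)\<bar> \<le> \<delta>"
      using VW unfolding wclose_def Vs by (metis length_greater_0_conv list.distinct(1) nth_Cons_0)+
    have V: "V \<in> carrier_mat n0 (ns' ! 0)" using V0 h(2) by auto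
    have wVs': "wclose \<delta>' Vs' Ws"
      unfolding wclose_def
    proof (intro conjI)
      show "length Vs' = length Ws" using VW unfolding wclose_def Vs by simp
      have dd: "\<delta> \<le> \<delta>'" unfolding \<delta>_def by simp
      show "\<forall>q<length Ws. dim_row (Vs' ! q) = dim_row (Ws ! q) \<and> dim_col (Vs' ! q) = dim_col (Ws ! q) \<and>
        (\<forall>i<dim_row (Ws ! q). \<forall>j<dim_col (Ws ! q). \<bar>Vs' ! q $$ (i,j) - Ws ! q $$ (i,j)\<bar> \<le> \<delta>')"
      proof (intro allI impI)
        fix q assume q: "q < length Ws"
        then have "Suc q < length (W # Ws)" by simp
        then have hq: "dim_row (Vs ! Suc q) = dim_row ((W # Ws) ! Suc q) \<and> dim_col (Vs ! Suc q) = dim_col ((W # Ws) ! Suc q) \<and>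
          (\<forall>i<dim_row ((W # Ws) ! Suc q). \<forall>j<dim_col ((W # Ws) ! Suc q). \<bar>Vs ! Suc q $$ (i,j) - (W # Ws) ! Suc q $$ (i,j)\<bar> \<le> \<delta>)"
          using VW unfolding wclose_def by blast
        then show "dim_row (Vs' ! q) = dim_row (Ws ! q) \<and> dim_col (Vs' ! q) = dim_col (Ws ! q) \<and>
          (\<forall>i<dim_row (Ws ! q). \<forall>j<dim_col (Ws ! q). \<bar>Vs' ! q $$ (i,j) - Ws ! q $$ (i,j)\<bar> \<le> \<delta>')"
          using dd unfolding Vs by force
      qed
    qed
    have x0: "dim_vec x = n0" using x h(1) by simp
    have y0: "dim_vec y = n0" using xy x0 unfolding vclose_def by simp
    have d1: "\<delta> \<le> 1" unfolding \<delta>_def by simp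
    have VWe: "\<forall>j<n0. \<forall>i<ns' ! 0. \<bar>V $$ (j,i) - W $$ (j,i)\<bar> \<le> \<delta>" using V0(3) h(2) by auto
    have lc: "vclose (\<delta> * (C * (n0 * (B + 1 + M)))) (layer (s l) V (b l) y) (layer (s l) W (b l) x)"
      by (rule layer_close[OF h(4) h(2) V h(3) x0 y0 VWe M(2) bx xy d1])
    have lc': "vclose \<delta>' (layer (s l) V (b l) y) (layer (s l) W (b l) x)"
      using lc dK unfolding vclose_def K_def by force
    have lb: "vbnd B' (layer (s l) W (b l) x)"
      unfolding B'_def by (rule layer_bnd[OF h(4) h(2) h(3) x0 M(2) Bb(2) bx])
    have ld: "dim_vec (layer (s l) W (b l) x) = ns' ! 0" using h(3) by (simp add: layer_dim)
    show "vclose \<epsilon> (net_aux l s b Vs y) (net_aux l s b (W # Ws) x)"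
      using IH ld lb lc' wVs' unfolding Vs by simp
  qed
qed

lemma perturb_list:
  fixes Ws :: "real mat list"
  assumes "\<forall>q<length Ws. Ws ! q \<in> carrier_mat (ns ! q) (ns ! Suc q)" "\<delta> > 0"
  shows "\<exists>Vs. length Vs = length Ws \<and> (\<forall>q<length Ws. Vs ! q \<in> carrier_mat (ns ! q) (ns ! Suc q) \<and>
     full_rank_mat (Vs ! q) \<and> (\<forall>i<ns ! q. \<forall>j<ns ! Suc q. \<bar>Vs ! q $$ (i,j) - Ws ! q $$ (i,j)\<bar> \<le> \<delta>))"
proof -
  have "\<forall>q\<in>{..<length Ws}. \<exists>V. V \<in> carrier_mat (ns ! q) (ns ! Suc q) \<and>
     full_rank_mat V \<and> (\<forall>i<ns ! q. \<forall>j<ns ! Suc q. \<bar>V $$ (i,j) - Ws ! q $$ (i,j)\<bar> \<le> \<delta>)"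
    using perturb_full_rank assms by blast
  then have "\<exists>f. \<forall>q\<in>{..<length Ws}. f q \<in> carrier_mat (ns ! q) (ns ! Suc q) \<and>
     full_rank_mat (f q) \<and> (\<forall>i<ns ! q. \<forall>j<ns ! Suc q. \<bar>f q $$ (i,j) - Ws ! q $$ (i,j)\<bar> \<le> \<delta>)"
    by (rule bchoice)
  then obtain f where f: "\<forall>q\<in>{..<length Ws}. f q \<in> carrier_mat (ns ! q) (ns ! Suc q) \<and>
     full_rank_mat (f q) \<and> (\<forall>i<ns ! q. \<forall>j<ns ! Suc q. \<bar>f q $$ (i,j) - Ws ! q $$ (i,j)\<bar> \<le> \<delta>)"
    by blast
  show ?thesis
    by (rule exI[of _ "map f [0..<length Ws]"]) (use f in auto)
qed

lemma compact_bound: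
  assumes "compact (vec_embed ` X)"
  shows "\<exists>B\<ge>0. \<forall>x\<in>X. \<forall>i<n. \<bar>vec_embed x i\<bar> \<le> B"
proof (induction n)
  case 0
  then show ?case by auto
next
  case (Suc n)
  then obtain B where B: "B \<ge> 0" "\<forall>x\<in>X. \<forall>i<n. \<bar>vec_embed x i\<bar> \<le> B" by blast
  have "compact ((\<lambda>f. f n) ` (vec_embed ` X))"
    by (rule compact_continuous_image[OF continuous_on_subset[OF continuous_on_product_coordinates] assms]) simp
  then have "bounded ((\<lambda>f. f n) ` (vec_embed ` X))" by (rule compact_imp_bounded)
  then obtain a where a: "\<forall>z\<in>(\<lambda>f. f n) ` (vec_embed ` X). norm z \<le> a" unfolding bounded_iff by blast
  show ?case
  proof (intro exI[of _ "max B a"] conjI ballI allI impI)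
    show "0 \<le> max B a" using B by simp
    fix x i assume x: "x \<in> X" and i: "i < Suc n"
    show "\<bar>vec_embed x i\<bar> \<le> max B a"
    proof (cases "i < n")
      case True then show ?thesis using B x by force
    next
      case False then have "i = n" using i by simp
      then show ?thesis using a x by force
    qed
  qed
qed

theorem proposition1:
  fixes L :: nat and ns :: "nat list" and s :: "nat \<Rightarrow> real \<Rightarrow> real"
    and b :: "nat \<Rightarrow> real vec" and X :: "real vec set"
    and W1 :: "real mat list" and \<epsilon> :: real
  assumes "L \<ge> 1"
    and "length ns = L + 1"
    and "\<forall>i \<le> L. ns ! i \<ge> 1"
    and "\<forall>l. 1 \<le> l \<and> l < L \<longrightarrow> admissible_activation (s l)"
    and "s L = id"
    and "\<forall>l. 1 \<le> l \<and> l \<le> L \<longrightarrow> b l \<in> carrier_vec (ns ! l)"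
    and "X \<subseteq> carrier_vec (ns ! 0)"
    and "compact (vec_embed ` X)"
    and "W1 \<in> weight_space ns"
    and "\<not> full_rank_weights W1"
    and "\<epsilon> > 0"
  shows "\<exists>W2 \<in> weight_space ns. full_rank_weights W2 \<and>
           (\<forall>x \<in> X. max_norm (net s b W2 x - net s b W1 x) \<le> \<epsilon>)"
proof -
  have lenW: "length W1 = L" using assms(2,9) unfolding weight_space_def by simp
  have carW: "\<forall>q<length W1. W1 ! q \<in> carrier_mat (ns ! q) (ns ! Suc q)"
    using assms(9) unfolding weight_space_def by simp
  have chain: "chain_ok s b 1 ns W1"
    unfolding chain_ok_def
  proof (intro conjI allI impI)
    show "length ns = length W1 + 1" using assms(2) lenW by simp
    fix q assume q: "q < length W1"
    show "W1 ! q \<in> carrier_mat (ns ! q) (ns ! Suc q)" using carW q by simp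
    show "b (1 + q) \<in> carrier_vec (ns ! Suc q)" using assms(6) q lenW by simp
    show "\<exists>C. C-lipschitz_on UNIV (s (1 + q))"
    proof (cases "1 + q < L")
      case True
      then show ?thesis using assms(4) unfolding admissible_activation_def by simp
    next
      case False
      then have "1 + q = L" using q lenW by simp
      then have "s (1 + q) = (\<lambda>x. x)" using assms(5) by (simp add: id_def)
      then show ?thesis using lipschitz_on_id by metis
    qed
  qed
  obtain B where B: "B \<ge> 0" "\<forall>x\<in>X. \<forall>i<ns ! 0. \<bar>vec_embed x i\<bar> \<le> B"
    using compact_bound[OF assms(8)] by blast
  have bX: "vbnd B x" if "x \<in> X" for x
    unfolding vbnd_def
  proof (intro allI impI)
    fix i assume "i < dim_vec x"
    moreover have "dim_vec x = ns ! 0" using assms(7) that by auto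
    ultimately show "\<bar>x $ i\<bar> \<le> B" using B(2) that unfolding vec_embed_def by force
  qed
  obtain \<delta> where d: "\<delta> > 0" and cont: "\<forall>x y Vs. dim_vec x = ns ! 0 \<longrightarrow> vbnd B x \<longrightarrow> vclose \<delta> y x \<longrightarrow> wclose \<delta> Vs W1 \<longrightarrow>
           vclose \<epsilon> (net_aux 1 s b Vs y) (net_aux 1 s b W1 x)"
    using net_aux_cont[OF chain assms(11) B(1)] by blast
  obtain Vs where Vs: "length Vs = length W1" "\<forall>q<length W1. Vs ! q \<in> carrier_mat (ns ! q) (ns ! Suc q) \<and>
     full_rank_mat (Vs ! q) \<and> (\<forall>i<ns ! q. \<forall>j<ns ! Suc q. \<bar>Vs ! q $$ (i,j) - W1 ! q $$ (i,j)\<bar> \<le> \<delta>)"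
    using perturb_list[OF carW d] by blast
  have ws: "Vs \<in> weight_space ns" unfolding weight_space_def using Vs assms(2) lenW by auto
  have fr: "full_rank_weights Vs" unfolding full_rank_weights_def
  proof
    fix W assume "W \<in> set Vs"
    then obtain q where "q < length Vs" "W = Vs ! q" by (auto simp: in_set_conv_nth)
    then show "full_rank_mat W" using Vs by simp
  qed
  have wc: "wclose \<delta> Vs W1" unfolding wclose_def
  proof (intro conjI allI impI)
    show "length Vs = length W1" using Vs by simp
    fix q assume q: "q < length W1"
    have c1: "W1 ! q \<in> carrier_mat (ns ! q) (ns ! Suc q)" using carW q by simp
    have c2: "Vs ! q \<in> carrier_mat (ns ! q) (ns ! Suc q)" using Vs q by simp
    show "dim_row (Vs ! q) = dim_row (W1 ! q)" "dim_col (Vs ! q) = dim_col (W1 ! q)"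
      using c1 c2 by auto
    fix i j assume "i < dim_row (W1 ! q)" "j < dim_col (W1 ! q)"
    then show "\<bar>Vs ! q $$ (i,j) - W1 ! q $$ (i,j)\<bar> \<le> \<delta>" using c1 Vs q by auto
  qed
  show ?thesis
  proof (intro bexI[OF _ ws] conjI fr ballI)
    fix x assume x: "x \<in> X"
    have dx: "dim_vec x = ns ! 0" using assms(7) x by auto
    have xx: "vclose \<delta> x x" unfolding vclose_def using d by simp
    have c: "vclose \<epsilon> (net s b Vs x) (net s b W1 x)"
      unfolding net_def using cont[rule_format, OF dx bX[OF x] xx wc] .
    have dn: "dim_vec (net s b W1 x) = ns ! L"
    proof -
      have "ns \<noteq> []" using assms(2) by auto
      then have "last ns = ns ! L" using last_conv_nth[of ns] assms(2) by simp
      then show ?thesis unfolding net_def using net_aux_dim[OF chain dx] by simp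
    qed
    have pos: "ns ! L \<ge> 1" using assms(3) by simp
    let ?v = "net s b Vs x - net s b W1 x"
    have dv: "dim_vec ?v = ns ! L" using dn by simp
    have "(MAX i\<in>{..<dim_vec ?v}. \<bar>?v $ i\<bar>) \<le> \<epsilon>"
    proof (subst Max_le_iff)
      show "finite ((\<lambda>i. \<bar>?v $ i\<bar>) ` {..<dim_vec ?v})" by simp
      show "(\<lambda>i. \<bar>?v $ i\<bar>) ` {..<dim_vec ?v} \<noteq> {}"
      proof -
        have "0 \<in> {..<dim_vec ?v}" using dv pos by simp
        then show ?thesis by blast
      qed
      show "\<forall>a\<in>(\<lambda>i. \<bar>?v $ i\<bar>) ` {..<dim_vec ?v}. a \<le> \<epsilon>"
        using c dv dn unfolding vclose_def by auto
    qed
    then show "max_norm ?v \<le> \<epsilon>" unfolding max_norm_def .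
  qed
qed

end
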